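(* Let $P$ be the uniform probability distribution on the equilateral triangle with vertices $(0,0)$, $(1,0)$, $(\frac12,\frac{\sqrt3}{2})$. Then, as $n\to\infty$, the $n$th quantization error satisfies $V_n(P)\le \frac{5}{72n}+O(n^{-3/2})$.
   Context: For a Borel probability measure $P$ on $\mathbb R^2$ with finite second moment and $n\ge1$, the $n$th quantization error is $V_n(P)=\inf\{\int \min_{a\in\alpha}\|x-a\|^2\,dP(x): \alpha\subset\mathbb R^2,\ \mathrm{card}(\alpha)\le n\}$, where $\|\cdot\|$ is the Euclidean norm. The uniform distribution on the triangle has density $\frac{4}{\sqrt3}$ on the triangle and $0$ elsewhere. The statement means: there is a constant $C$ such that $V_n(P)\le \frac{5}{72n}+Cn^{-3/2}$ for all sufficiently large $n$. *)

theory Defs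
  imports "HOL-Analysis.Analysis"
begin

definition triangle :: "(real \<times> real) set" where
  "triangle = convex hull {(0, 0), (1, 0), (1/2, sqrt 3 / 2)}"

definition unif_triangle :: "(real \<times> real) measure" where
  "unif_triangle = density lborel (\<lambda>x. ennreal (4 / sqrt 3 * indicator triangle x))"

definition distortion :: "(real \<times> real) measure \<Rightarrow> (real \<times> real) set \<Rightarrow> real" where
  "distortion P \<alpha> = (\<integral>x. Min ((\<lambda>a. (norm (x - a))\<^sup>2) ` \<alpha>) \<partial>P)"

definition quant_error :: "(real \<times> real) measure \<Rightarrow> nat \<Rightarrow> real" where
  "quant_error P n = Inf {distortion P \<alpha> | \<alpha>. finite \<alpha> \<and> \<alpha> \<noteq> {} \<and> card \<alpha> \<le> n}"

end

theory Submission
  imports Defs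
begin


definition Q :: "real \<times> real \<Rightarrow> real" where
  "Q z = (fst z)^2 + fst z * snd z + (snd z)^2"

lemma Q_nonneg: "0 \<le> Q z"
proof -
  have "Q z = (fst z + snd z / 2)^2 + 3/4 * (snd z)^2" by (simp add: Q_def power2_eq_square algebra_simps)
  then show ?thesis by simp
qed

lemma Q_meas[measurable]: "Q \<in> borel_measurable borel"
  by (subst borel_prod[symmetric]) (unfold Q_def, measurable)

definition K1 :: "real \<times> real \<Rightarrow> real" where
  "K1 z = (if 0 \<le> fst z \<and> fst z \<le> 1 \<and> 0 \<le> snd z \<and> snd z \<le> 1 then Q (fst z, snd z - 1) else 0)"

lemma K1_meas[measurable]: "K1 \<in> borel_measurable borel"
  by (subst borel_prod[symmetric]) (unfold K1_def Q_def, measurable)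

lemma nn_prod:
  fixes F :: "real \<times> real \<Rightarrow> ennreal"
  assumes [measurable]: "F \<in> borel_measurable borel"
  shows "(\<integral>\<^sup>+z. F z \<partial>lborel) = (\<integral>\<^sup>+ z2. (\<integral>\<^sup>+ z1. F (z1, z2) \<partial>lborel) \<partial>lborel)"
proof -
  have [measurable]: "F \<in> borel_measurable (lborel \<Otimes>\<^sub>M lborel)"
    by (simp add: lborel_prod measurable_lborel1)
  show ?thesis
    by (subst lborel_pair.nn_integral_snd) (simp_all add: lborel_prod)
qed

lemma K1_int: "(\<integral>\<^sup>+z. ennreal (K1 z) \<partial>lborel) = ennreal (5/12)"
proof -
  have "(\<integral>\<^sup>+z. ennreal (K1 z) \<partial>lborel) = (\<integral>\<^sup>+ z2. (\<integral>\<^sup>+ z1. ennreal (K1 (z1, z2)) \<partial>lborel) \<partial>lborel)"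
    by (rule nn_prod) measurable
  also have "\<dots> = (\<integral>\<^sup>+ z2. ennreal (1/3 + (z2-1)/2 + (z2-1)^2) * indicator {0..1} z2 \<partial>lborel)"
  proof (rule nn_integral_cong)
    fix z2 :: real
    show "(\<integral>\<^sup>+ z1. ennreal (K1 (z1, z2)) \<partial>lborel) = ennreal (1/3 + (z2-1)/2 + (z2-1)^2) * indicator {0..1} z2"
    proof (cases "z2 \<in> {0..1}")
      case True
      have "(\<integral>\<^sup>+ z1. ennreal (K1 (z1, z2)) \<partial>lborel) = (\<integral>\<^sup>+ z1. ennreal (Q (z1, z2 - 1)) * indicator {0..1} z1 \<partial>lborel)"
        using True by (intro nn_integral_cong) (auto simp: K1_def indicator_def)
      also have "\<dots> = ennreal ((\<lambda>t. (t^3/3 + t^2 * (z2-1)/2 + t * (z2-1)^2)) 1 - (\<lambda>t. (t^3/3 + t^2 * (z2-1)/2 + t * (z2-1)^2)) 0)"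
        apply (rule nn_integral_FTC_Icc)
        subgoal by measurable
        subgoal by (auto intro!: derivative_eq_intros simp: Q_def power2_eq_square field_simps)
        subgoal by (rule Q_nonneg)
        by simp
      also have "\<dots> = ennreal (1/3 + (z2-1)/2 + (z2-1)^2) * indicator {0..1} z2"
        using True by (auto simp: indicator_def algebra_simps)
      finally show ?thesis .
    next
      case False
      then have "(\<lambda>z1. ennreal (K1 (z1, z2))) = (\<lambda>_. 0)" by (auto simp: K1_def fun_eq_iff)
      then show ?thesis using False by simp
    qed
  qed
  also have "\<dots> = ennreal ((\<lambda>t. t/3 + (t-1)^2/4 + (t-1)^3/3) 1 - (\<lambda>t. t/3 + (t-1)^2/4 + (t-1)^3/3) 0)"
    apply (rule nn_integral_FTC_Icc)
    subgoal by measurable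
    subgoal by (auto intro!: derivative_eq_intros simp: power2_eq_square algebra_simps, simp add: field_simps)
    subgoal for x
    proof -
      have "1/3 + (x-1)/2 + (x-1)^2 = (x - 1 + 1/4)^2 + 13/48" by (simp add: power2_eq_square field_simps)
      moreover have "0 \<le> (x - 1 + 1/4)^2" by simp
      ultimately show ?thesis by linarith
    qed
    by simp
  also have "\<dots> = ennreal (5/12)" by simp
  finally show ?thesis .
qed

definition K2 :: "real \<times> real \<Rightarrow> real" where
  "K2 z = (if 0 \<le> fst z \<and> fst z \<le> 1 \<and> 0 \<le> snd z \<and> snd z \<le> 1 then Q (fst z - 1, snd z) else 0)"

lemma K2_meas[measurable]: "K2 \<in> borel_measurable borel"
  by (subst borel_prod[symmetric]) (unfold K2_def Q_def, measurable)

lemma K2_int: "(\<integral>\<^sup>+z. ennreal (K2 z) \<partial>lborel) = ennreal (5/12)"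
proof -
  have "(\<integral>\<^sup>+z. ennreal (K2 z) \<partial>lborel) = (\<integral>\<^sup>+ z2. (\<integral>\<^sup>+ z1. ennreal (K2 (z1, z2)) \<partial>lborel) \<partial>lborel)"
    by (rule nn_prod) measurable
  also have "\<dots> = (\<integral>\<^sup>+ z2. ennreal (1/3 - z2/2 + z2^2) * indicator {0..1} z2 \<partial>lborel)"
  proof (rule nn_integral_cong)
    fix z2 :: real
    show "(\<integral>\<^sup>+ z1. ennreal (K2 (z1, z2)) \<partial>lborel) = ennreal (1/3 - z2/2 + z2^2) * indicator {0..1} z2"
    proof (cases "z2 \<in> {0..1}")
      case True
      have "(\<integral>\<^sup>+ z1. ennreal (K2 (z1, z2)) \<partial>lborel) = (\<integral>\<^sup>+ z1. ennreal (Q (z1 - 1, z2)) * indicator {0..1} z1 \<partial>lborel)"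
        using True by (intro nn_integral_cong) (auto simp: K2_def indicator_def)
      also have "\<dots> = ennreal ((\<lambda>t. ((t-1)^3/3 + (t-1)^2 * z2/2 + (t-1) * z2^2)) 1 - (\<lambda>t. ((t-1)^3/3 + (t-1)^2 * z2/2 + (t-1) * z2^2)) 0)"
        apply (rule nn_integral_FTC_Icc)
        subgoal by measurable
        subgoal by (auto intro!: derivative_eq_intros simp: Q_def power2_eq_square field_simps)
        subgoal by (rule Q_nonneg)
        by simp
      also have "\<dots> = ennreal (1/3 - z2/2 + z2^2) * indicator {0..1} z2"
        using True by (auto simp: indicator_def algebra_simps)
      finally show ?thesis .
    next
      case False
      then have "(\<lambda>z1. ennreal (K2 (z1, z2))) = (\<lambda>_. 0)" by (auto simp: K2_def fun_eq_iff)
      then show ?thesis using False by simp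
    qed
  qed
  also have "\<dots> = ennreal ((\<lambda>t. t/3 - t^2/4 + t^3/3) 1 - (\<lambda>t. t/3 - t^2/4 + t^3/3) 0)"
    apply (rule nn_integral_FTC_Icc)
    subgoal by measurable
    subgoal by (auto intro!: derivative_eq_intros simp: power2_eq_square algebra_simps)
    subgoal for x
    proof -
      have "1/3 - x/2 + x^2 = (x - 1/4)^2 + 13/48" by (simp add: power2_eq_square field_simps)
      moreover have "0 \<le> (x - 1/4)^2" by simp
      ultimately show ?thesis by linarith
    qed
    by simp
  also have "\<dots> = ennreal (5/12)" by simp
  finally show ?thesis .
qed

definition K0a :: "real \<times> real \<Rightarrow> real" where
  "K0a z = (if 0 \<le> snd z \<and> snd z \<le> 1 \<and> 0 \<le> fst z \<and> fst z \<le> 1 - snd z then Q z else 0)"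

lemma K0a_meas[measurable]: "K0a \<in> borel_measurable borel"
  by (subst borel_prod[symmetric]) (unfold K0a_def Q_def, measurable)

lemma K0a_int: "(\<integral>\<^sup>+z. ennreal (K0a z) \<partial>lborel) = ennreal (5/24)"
proof -
  have "(\<integral>\<^sup>+z. ennreal (K0a z) \<partial>lborel) = (\<integral>\<^sup>+ z2. (\<integral>\<^sup>+ z1. ennreal (K0a (z1, z2)) \<partial>lborel) \<partial>lborel)"
    by (rule nn_prod) measurable
  also have "\<dots> = (\<integral>\<^sup>+ z2. ennreal ((1-z2)^3/3 + (1-z2)^2 * z2/2 + (1-z2) * z2^2) * indicator {0..1} z2 \<partial>lborel)"
  proof (rule nn_integral_cong)
    fix z2 :: real
    show "(\<integral>\<^sup>+ z1. ennreal (K0a (z1, z2)) \<partial>lborel) = ennreal ((1-z2)^3/3 + (1-z2)^2 * z2/2 + (1-z2) * z2^2) * indicator {0..1} z2"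
    proof (cases "z2 \<in> {0..1}")
      case True
      have "(\<integral>\<^sup>+ z1. ennreal (K0a (z1, z2)) \<partial>lborel) = (\<integral>\<^sup>+ z1. ennreal (Q (z1, z2)) * indicator {0..1-z2} z1 \<partial>lborel)"
        using True by (intro nn_integral_cong) (auto simp: K0a_def indicator_def)
      also have "\<dots> = ennreal ((\<lambda>t. (t^3/3 + t^2 * z2/2 + t * z2^2)) (1-z2) - (\<lambda>t. (t^3/3 + t^2 * z2/2 + t * z2^2)) 0)"
        apply (rule nn_integral_FTC_Icc)
        subgoal by measurable
        subgoal by (auto intro!: derivative_eq_intros simp: Q_def power2_eq_square field_simps)
        subgoal by (rule Q_nonneg)
        using True by simp
      also have "\<dots> = ennreal ((1-z2)^3/3 + (1-z2)^2 * z2/2 + (1-z2) * z2^2) * indicator {0..1} z2"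
        using True by (auto simp: indicator_def algebra_simps)
      finally show ?thesis .
    next
      case False
      then have "(\<lambda>z1. ennreal (K0a (z1, z2))) = (\<lambda>_. 0)" by (auto simp: K0a_def fun_eq_iff)
      then show ?thesis using False by simp
    qed
  qed
  also have "\<dots> = ennreal ((\<lambda>t. t/3 - t^2/4 + t^3/3 - 5*t^4/24) 1 - (\<lambda>t. t/3 - t^2/4 + t^3/3 - 5*t^4/24) 0)"
    apply (rule nn_integral_FTC_Icc)
    subgoal by measurable
    subgoal by (auto intro!: derivative_eq_intros simp: power2_eq_square power3_eq_cube algebra_simps, simp add: field_simps)
    subgoal for x by (auto intro!: add_nonneg_nonneg mult_nonneg_nonneg)
    by simp
  also have "\<dots> = ennreal (5/24)" by simp
  finally show ?thesis .
qed

definition K0b :: "real \<times> real \<Rightarrow> real" where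
  "K0b z = (if 0 \<le> snd z \<and> snd z \<le> 1 \<and> 1 - snd z \<le> fst z \<and> fst z \<le> 1 then Q (fst z - 1, snd z - 1) else 0)"

lemma K0b_meas[measurable]: "K0b \<in> borel_measurable borel"
  by (subst borel_prod[symmetric]) (unfold K0b_def Q_def, measurable)

lemma K0b_int: "(\<integral>\<^sup>+z. ennreal (K0b z) \<partial>lborel) = ennreal (5/24)"
proof -
  have "(\<integral>\<^sup>+z. ennreal (K0b z) \<partial>lborel) = (\<integral>\<^sup>+ z2. (\<integral>\<^sup>+ z1. ennreal (K0b (z1, z2)) \<partial>lborel) \<partial>lborel)"
    by (rule nn_prod) measurable
  also have "\<dots> = (\<integral>\<^sup>+ z2. ennreal (z2^3/3 + z2^2 * (1 - z2)/2 + z2 * (z2-1)^2) * indicator {0..1} z2 \<partial>lborel)"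
  proof (rule nn_integral_cong)
    fix z2 :: real
    show "(\<integral>\<^sup>+ z1. ennreal (K0b (z1, z2)) \<partial>lborel) = ennreal (z2^3/3 + z2^2 * (1 - z2)/2 + z2 * (z2-1)^2) * indicator {0..1} z2"
    proof (cases "z2 \<in> {0..1}")
      case True
      have "(\<integral>\<^sup>+ z1. ennreal (K0b (z1, z2)) \<partial>lborel) = (\<integral>\<^sup>+ z1. ennreal (Q (z1 - 1, z2 - 1)) * indicator {1-z2..1} z1 \<partial>lborel)"
        using True by (intro nn_integral_cong) (auto simp: K0b_def indicator_def)
      also have "\<dots> = ennreal ((\<lambda>t. ((t-1)^3/3 + (t-1)^2 * (z2-1)/2 + (t-1) * (z2-1)^2)) 1 - (\<lambda>t. ((t-1)^3/3 + (t-1)^2 * (z2-1)/2 + (t-1) * (z2-1)^2)) (1-z2))"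
        apply (rule nn_integral_FTC_Icc)
        subgoal by measurable
        subgoal by (auto intro!: derivative_eq_intros simp: Q_def power2_eq_square field_simps)
        subgoal by (rule Q_nonneg)
        using True by simp
      also have "\<dots> = ennreal (z2^3/3 + z2^2 * (1 - z2)/2 + z2 * (z2-1)^2) * indicator {0..1} z2"
        using True apply (simp add: indicator_def del: ennreal_plus) apply (rule arg_cong[where f=ennreal]) by (simp add: power2_eq_square power3_eq_cube field_simps)
      finally show ?thesis .
    next
      case False
      then have "(\<lambda>z1. ennreal (K0b (z1, z2))) = (\<lambda>_. 0)" by (auto simp: K0b_def fun_eq_iff)
      then show ?thesis using False by simp
    qed
  qed
  also have "\<dots> = ennreal ((\<lambda>t. 5*t^4/24 - t^3/2 + t^2/2) 1 - (\<lambda>t. 5*t^4/24 - t^3/2 + t^2/2) 0)"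
    apply (rule nn_integral_FTC_Icc)
    subgoal by measurable
    subgoal by (auto intro!: derivative_eq_intros simp: power2_eq_square power3_eq_cube algebra_simps, simp add: field_simps)
    subgoal for x by (auto intro!: add_nonneg_nonneg mult_nonneg_nonneg)
    by simp
  also have "\<dots> = ennreal (5/24)" by simp
  finally show ?thesis .
qed



definition Sm :: "real \<Rightarrow> real \<times> real \<Rightarrow> real \<times> real" where
  "Sm m x = (m * (fst x - snd x / sqrt 3), m * (2 * snd x / sqrt 3))"

definition Tm :: "real \<Rightarrow> real \<times> real \<Rightarrow> real \<times> real" where
  "Tm m c = ((fst c + snd c / 2) / m, (sqrt 3 / 2 * snd c) / m)"

lemma TS: "m > 0 \<Longrightarrow> Tm m (Sm m x) = x"
  by (cases x) (simp add: Tm_def Sm_def field_simps)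

lemma norm_pair_sq: "(norm ((a::real), (b::real)))^2 = a^2 + b^2"
  by (simp add: norm_Pair)

lemma norm_Tm: "m > 0 \<Longrightarrow> (norm (x - Tm m c))^2 = Q (Sm m x - c) / m^2"
proof -
  assume m: "m > 0"
  obtain y1 y2 where y: "Sm m x = (y1, y2)" by (cases "Sm m x")
  have x: "x = Tm m (y1, y2)" using TS[OF m, of x] y by simp
  obtain c1 c2 where c: "c = (c1, c2)" by (cases c)
  define d1 where "d1 = y1 - c1"
  define d2 where "d2 = y2 - c2"
  have "x - Tm m c = ((d1 + d2/2)/m, sqrt 3/2 * d2 / m)"
    unfolding x c Tm_def d1_def d2_def by (simp add: diff_divide_distrib algebra_simps)
  then have "(norm (x - Tm m c))^2 = ((d1 + d2/2)/m)^2 + (sqrt 3/2 * d2 / m)^2"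
    by (simp only: norm_pair_sq)
  also have "(sqrt 3/2 * d2 / m)^2 = 3/4 * d2^2 / m^2"
    by (simp add: power_mult_distrib power_divide)
  also have "((d1 + d2/2)/m)^2 + 3/4 * d2^2 / m^2 = (d1^2 + d1 * d2 + d2^2) / m^2"
    using m by (simp add: power_divide power2_eq_square field_simps)
  also have "\<dots> = Q (Sm m x - c) / m^2"
    by (simp add: y c Q_def d1_def d2_def)
  finally show ?thesis .
qed

lemma triangle_param:
  assumes "x \<in> triangle"
  obtains v w where "0 \<le> v" "0 \<le> w" "v + w \<le> 1" "Sm m x = (m * v, m * w)"
proof -
  from assms obtain u v w where uvw: "0 \<le> u" "0 \<le> v" "0 \<le> w" "u + v + w = 1"
    and x: "x = u *\<^sub>R (0,0) + v *\<^sub>R (1,0) + w *\<^sub>R (1/2, sqrt 3 / 2)"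
    unfolding triangle_def convex_hull_3 by blast
  have "Sm m x = (m * v, m * w)" unfolding x by (simp add: Sm_def field_simps)
  then show ?thesis using that uvw by auto
qed



definition Ic :: "nat \<Rightarrow> (nat \<times> nat) set" where
  "Ic M = {(i,j). i + j \<le> M \<and> i mod 3 = j mod 3}"

definition cb :: "nat \<Rightarrow> (real \<times> real) set" where
  "cb m = (\<lambda>(i,j). Tm (real m) (real i, real j)) ` Ic (m+2)"

definition Cells :: "nat \<Rightarrow> (nat \<times> nat) set" where
  "Cells m = {(a,b). a + b \<le> m}"

definition Kc :: "nat \<times> nat \<Rightarrow> real \<times> real \<Rightarrow> real" where
  "Kc ab z = (if (fst ab + 2 * snd ab) mod 3 = 0 then K0a z + K0b z
              else if (fst ab + 2 * snd ab) mod 3 = 1 then K1 z else K2 z)"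

definition Bh :: "nat \<Rightarrow> real \<times> real \<Rightarrow> ennreal" where
  "Bh m y = (\<Sum>ab\<in>Cells m. ennreal (Kc ab (y - (real (fst ab), real (snd ab)))))"

lemma finite_Ic: "finite (Ic M)"
  by (rule finite_subset[of _ "{..M} \<times> {..M}"]) (auto simp: Ic_def)

lemma finite_Cells: "finite (Cells m)"
  by (rule finite_subset[of _ "{..m} \<times> {..m}"]) (auto simp: Cells_def)

lemma finite_cb: "finite (cb m)" unfolding cb_def using finite_Ic by simp

lemma K_nonneg: "0 \<le> K0a z" "0 \<le> K0b z" "0 \<le> K1 z" "0 \<le> K2 z"
  by (auto simp: K0a_def K0b_def K1_def K2_def Q_nonneg)

lemma Kc_nonneg: "0 \<le> Kc ab z"
  by (simp add: Kc_def K_nonneg)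

lemma pointwise:
  assumes m: "m \<ge> 1" and x: "x \<in> triangle"
  shows "ennreal (Min ((\<lambda>a. (norm (x - a))^2) ` cb m)) \<le> ennreal (1 / (real m)^2) * Bh m (Sm (real m) x)"
proof -
  have mpos: "real m > 0" using m by simp
  obtain v w :: real where vw: "0 \<le> v" "0 \<le> w" "v + w \<le> 1" and S: "Sm (real m) x = (real m * v, real m * w)"
    by (rule triangle_param[OF x])
  define y1 where "y1 = real m * v"
  define y2 where "y2 = real m * w"
  define a where "a = nat \<lfloor>y1\<rfloor>"
  define b where "b = nat \<lfloor>y2\<rfloor>"
  have y1: "0 \<le> y1" and y2: "0 \<le> y2" using vw by (auto simp: y1_def y2_def)
  have ya: "real a \<le> y1" "y1 < real a + 1" using y1 unfolding a_def by linarith+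
  have yb: "real b \<le> y2" "y2 < real b + 1" using y2 unfolding b_def by linarith+
  have "y1 + y2 \<le> real m" using vw mpos unfolding y1_def y2_def
    by (metis distrib_left mult.right_neutral mult_left_mono less_imp_le)
  then have "real (a + b) \<le> real m" using ya yb by simp
  then have abm: "a + b \<le> m" by linarith
  define z1 where "z1 = y1 - a"
  define z2 where "z2 = y2 - b"
  have z: "0 \<le> z1" "z1 \<le> 1" "0 \<le> z2" "z2 \<le> 1" using ya yb by (auto simp: z1_def z2_def)
  have ysub: "\<And>c1 c2. Sm (real m) x - (real c1, real c2) = (z1 - (real c1 - a), z2 - (real c2 - b))"
    by (simp add: S y1_def[symmetric] y2_def[symmetric] z1_def z2_def)
  have "\<exists>c\<in>Ic (m+2). Q (Sm (real m) x - (real (fst c), real (snd c))) \<le> Kc (a,b) (z1, z2)"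
  proof -
    consider "(a + 2*b) mod 3 = 0" | "(a + 2*b) mod 3 = 1" | "(a + 2*b) mod 3 = 2" by linarith
    then show ?thesis
    proof cases
      case 1
      show ?thesis
      proof (cases "z1 \<le> 1 - z2")
        case True
        have "(a, b) \<in> Ic (m+2)" using 1 abm unfolding Ic_def by auto presburger
        moreover have "Q (Sm (real m) x - (real a, real b)) \<le> Kc (a,b) (z1, z2)"
          using 1 True z ysub[of a b] by (simp add: Kc_def K0a_def K_nonneg)
        ultimately show ?thesis by force
      next
        case False
        have "(a+1, b+1) \<in> Ic (m+2)" using 1 abm unfolding Ic_def by auto presburger
        moreover have "Q (Sm (real m) x - (real (a+1), real (b+1))) \<le> Kc (a,b) (z1, z2)"
          using 1 False z ysub[of "a+1" "b+1"] by (simp add: Kc_def K0b_def K_nonneg)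
        ultimately show ?thesis by force
      qed
    next
      case 2
      have "(a, b+1) \<in> Ic (m+2)" using 2 abm unfolding Ic_def by auto presburger
      moreover have "Q (Sm (real m) x - (real a, real (b+1))) \<le> Kc (a,b) (z1, z2)"
        using 2 z ysub[of a "b+1"] by (simp add: Kc_def K1_def)
      ultimately show ?thesis by force
    next
      case 3
      have "(a+1, b) \<in> Ic (m+2)" using 3 abm unfolding Ic_def by auto presburger
      moreover have "Q (Sm (real m) x - (real (a+1), real b)) \<le> Kc (a,b) (z1, z2)"
        using 3 z ysub[of "a+1" b] by (simp add: Kc_def K2_def)
      ultimately show ?thesis by force
    qed
  qed
  then obtain c where c: "c \<in> Ic (m+2)" and cQ: "Q (Sm (real m) x - (real (fst c), real (snd c))) \<le> Kc (a,b) (z1, z2)"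
    by blast
  have "Tm (real m) (real (fst c), real (snd c)) \<in> cb m"
    using c unfolding cb_def by (auto intro!: image_eqI[of _ _ c] split: prod.splits)
  then have "Min ((\<lambda>a. (norm (x - a))^2) ` cb m) \<le> (norm (x - Tm (real m) (real (fst c), real (snd c))))^2"
    using finite_cb by (intro Min_le) auto
  also have "\<dots> = Q (Sm (real m) x - (real (fst c), real (snd c))) / (real m)^2"
    by (rule norm_Tm[OF mpos])
  also have "\<dots> \<le> Kc (a,b) (z1, z2) / (real m)^2"
    using cQ by (simp add: divide_right_mono)
  finally have le0: "Min ((\<lambda>a. (norm (x - a))^2) ` cb m) \<le> 1 / (real m)^2 * Kc (a,b) (z1, z2)" by simp
  have "ennreal (Min ((\<lambda>a. (norm (x - a))^2) ` cb m)) \<le> ennreal (1 / (real m)^2 * Kc (a,b) (z1, z2))"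
    by (rule ennreal_leI[OF le0])
  also have "\<dots> = ennreal (1 / (real m)^2) * ennreal (Kc (a,b) (z1, z2))"
    by (rule ennreal_mult) (auto simp: Kc_nonneg)
  finally have le1: "ennreal (Min ((\<lambda>a. (norm (x - a))^2) ` cb m)) \<le> ennreal (1 / (real m)^2) * ennreal (Kc (a,b) (z1, z2))" .
  have "(a,b) \<in> Cells m" using abm by (simp add: Cells_def)
  then have "ennreal (Kc (a,b) (z1, z2)) \<le> Bh m (Sm (real m) x)"
    unfolding Bh_def
    using member_le_sum[of "(a,b)" "Cells m" "\<lambda>ab. ennreal (Kc ab (Sm (real m) x - (real (fst ab), real (snd ab))))"] finite_Cells
    by (simp add: S y1_def[symmetric] y2_def[symmetric] z1_def z2_def)
  then show ?thesis using le1
    by (meson order_trans mult_left_mono zero_le)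
qed



lemma affine_inv:
  fixes f :: "real \<Rightarrow> ennreal" and c :: real
  assumes [measurable]: "f \<in> borel_measurable borel" and c: "c \<noteq> 0"
  shows "(\<integral>\<^sup>+x. f (t + c * x) \<partial>lborel) = ennreal (1/\<bar>c\<bar>) * (\<integral>\<^sup>+x. f x \<partial>lborel)"
proof -
  have "ennreal (1/\<bar>c\<bar>) * (\<integral>\<^sup>+x. f x \<partial>lborel) = ennreal (1/\<bar>c\<bar>) * (ennreal \<bar>c\<bar> * (\<integral>\<^sup>+x. f (t + c * x) \<partial>lborel))"
    using nn_integral_real_affine[OF assms, of t] by simp
  also have "\<dots> = (ennreal (1/\<bar>c\<bar>) * ennreal \<bar>c\<bar>) * (\<integral>\<^sup>+x. f (t + c * x) \<partial>lborel)"
    by (simp add: mult.assoc)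
  also have "ennreal (1/\<bar>c\<bar>) * ennreal \<bar>c\<bar> = 1"
    using c by (simp add: ennreal_mult[symmetric])
  finally show ?thesis by simp
qed

lemma change_vars:
  fixes F :: "real \<times> real \<Rightarrow> ennreal"
  assumes F[measurable]: "F \<in> borel_measurable borel" and m: "m > 0"
  shows "(\<integral>\<^sup>+x. F (Sm m x) \<partial>lborel) = ennreal (sqrt 3 / (2 * m^2)) * (\<integral>\<^sup>+y. F y \<partial>lborel)"
proof -
  have Fp[measurable]: "F \<in> borel_measurable (lborel \<Otimes>\<^sub>M lborel)"
    using F by (simp add: lborel_prod measurable_lborel1)
  have FS[measurable]: "(\<lambda>x. F (Sm m x)) \<in> borel_measurable (lborel \<Otimes>\<^sub>M lborel)"
    unfolding Sm_def by measurable
  have "(\<integral>\<^sup>+x. F (Sm m x) \<partial>lborel) = (\<integral>\<^sup>+x. F (Sm m x) \<partial>(lborel \<Otimes>\<^sub>M lborel))"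
    by (simp add: lborel_prod)
  also have "\<dots> = (\<integral>\<^sup>+ x2. (\<integral>\<^sup>+ x1. F (Sm m (x1, x2)) \<partial>lborel) \<partial>lborel)"
    by (rule lborel_pair.nn_integral_snd[symmetric]) simp
  also have "\<dots> = (\<integral>\<^sup>+ x2. ennreal (1/m) * (\<integral>\<^sup>+ t. F (t, m * (2 * x2 / sqrt 3)) \<partial>lborel) \<partial>lborel)"
  proof (rule nn_integral_cong)
    fix x2
    have "(\<integral>\<^sup>+ x1. F (Sm m (x1, x2)) \<partial>lborel) = (\<integral>\<^sup>+ x1. (\<lambda>t. F (t, m * (2 * x2 / sqrt 3))) (- m * x2 / sqrt 3 + m * x1) \<partial>lborel)"
      by (simp add: Sm_def algebra_simps diff_divide_distrib)
    also have "\<dots> = ennreal (1/\<bar>m\<bar>) * (\<integral>\<^sup>+ t. F (t, m * (2 * x2 / sqrt 3)) \<partial>lborel)"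
      by (rule affine_inv) (use m in auto)
    finally show "(\<integral>\<^sup>+ x1. F (Sm m (x1, x2)) \<partial>lborel) = ennreal (1/m) * (\<integral>\<^sup>+ t. F (t, m * (2 * x2 / sqrt 3)) \<partial>lborel)"
      using m by simp
  qed
  also have "\<dots> = ennreal (1/m) * (\<integral>\<^sup>+ x2. (\<lambda>s. \<integral>\<^sup>+ t. F (t, s) \<partial>lborel) (0 + (2 * m / sqrt 3) * x2) \<partial>lborel)"
    by (subst nn_integral_cmult) (auto simp: algebra_simps)
  also have "\<dots> = ennreal (1/m) * (ennreal (1/\<bar>2 * m / sqrt 3\<bar>) * (\<integral>\<^sup>+ s. (\<integral>\<^sup>+ t. F (t, s) \<partial>lborel) \<partial>lborel))"
    by (subst affine_inv) (use m in auto)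
  also have "(\<integral>\<^sup>+ s. (\<integral>\<^sup>+ t. F (t, s) \<partial>lborel) \<partial>lborel) = (\<integral>\<^sup>+y. F y \<partial>(lborel \<Otimes>\<^sub>M lborel))"
    by (rule lborel_pair.nn_integral_snd) simp
  also have "\<dots> = (\<integral>\<^sup>+y. F y \<partial>lborel)" by (simp add: lborel_prod)
  also have "ennreal (1/m) * (ennreal (1/\<bar>2 * m / sqrt 3\<bar>) * (\<integral>\<^sup>+y. F y \<partial>lborel)) = (ennreal (1/m) * ennreal (1/\<bar>2 * m / sqrt 3\<bar>)) * (\<integral>\<^sup>+y. F y \<partial>lborel)"
    by (simp add: mult.assoc)
  also have "ennreal (1/m) * ennreal (1/\<bar>2 * m / sqrt 3\<bar>) = ennreal (sqrt 3 / (2 * m^2))"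
    using m by (simp add: ennreal_mult[symmetric] power2_eq_square field_simps)
  finally show ?thesis .
qed

lemma translate:
  fixes f :: "real \<times> real \<Rightarrow> ennreal"
  assumes [measurable]: "f \<in> borel_measurable borel"
  shows "(\<integral>\<^sup>+y. f (y - c) \<partial>lborel) = (\<integral>\<^sup>+y. f y \<partial>lborel)"
proof -
  have "(\<integral>\<^sup>+y. f y \<partial>lborel) = (\<integral>\<^sup>+y. f y \<partial>(distr lborel borel ((+) (-c))))"
    by (simp add: lborel_distr_plus)
  also have "\<dots> = (\<integral>\<^sup>+y. f (-c + y) \<partial>lborel)"
    by (subst nn_integral_distr) auto
  finally show ?thesis by simp
qed

lemma Kc_meas[measurable]: "Kc ab \<in> borel_measurable borel"
  unfolding Kc_def by measurable

lemma Kc_int: "(\<integral>\<^sup>+z. ennreal (Kc ab z) \<partial>lborel) = ennreal (5/12)"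
proof -
  consider "(fst ab + 2 * snd ab) mod 3 = 0" | "(fst ab + 2 * snd ab) mod 3 = 1" | "(fst ab + 2 * snd ab) mod 3 = 2"
    by linarith
  then show ?thesis
  proof cases
    case 1
    have "(\<integral>\<^sup>+z. ennreal (Kc ab z) \<partial>lborel) = (\<integral>\<^sup>+z. ennreal (K0a z) + ennreal (K0b z) \<partial>lborel)"
      using 1 by (intro nn_integral_cong) (simp add: Kc_def K_nonneg)
    also have "\<dots> = ennreal (5/24) + ennreal (5/24)"
      by (subst nn_integral_add) (auto simp: K0a_int K0b_int)
    also have "\<dots> = ennreal (5/12)" by (simp add: ennreal_plus[symmetric] del: ennreal_plus)
    finally show ?thesis .
  next
    case 2 then show ?thesis by (simp add: Kc_def K1_int)
  next
    case 3 then show ?thesis by (simp add: Kc_def K2_int)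
  qed
qed

lemma Bh_meas[measurable]: "Bh m \<in> borel_measurable borel"
  unfolding Bh_def by measurable

lemma Bh_int: "(\<integral>\<^sup>+y. Bh m y \<partial>lborel) = of_nat (card (Cells m)) * ennreal (5/12)"
proof -
  have "(\<integral>\<^sup>+y. Bh m y \<partial>lborel) = (\<Sum>ab\<in>Cells m. \<integral>\<^sup>+y. ennreal (Kc ab (y - (real (fst ab), real (snd ab)))) \<partial>lborel)"
    unfolding Bh_def by (rule nn_integral_sum) measurable
  also have "\<dots> = (\<Sum>ab\<in>Cells m. ennreal (5/12))"
    by (intro sum.cong refl) (simp add: translate[of "\<lambda>z. ennreal (Kc _ z)"] Kc_int)
  finally show ?thesis by simp
qed



lemma cb_ne: "cb m \<noteq> {}"
proof -
  have "(0,0) \<in> Ic (m+2)" by (simp add: Ic_def)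
  then show ?thesis unfolding cb_def by blast
qed

lemma triangle_closed: "closed triangle"
  unfolding triangle_def by (intro compact_imp_closed compact_convex_hull finite_imp_compact) simp

lemma distortion_bound:
  assumes m: "m \<ge> 1"
  shows "distortion unif_triangle (cb m) \<le> 5 * real (card (Cells m)) / (6 * real m ^ 4)"
proof -
  define M where "M x = Min ((\<lambda>a. (norm (x - a))^2) ` cb m)" for x
  have mpos: "real m > 0" using m by simp
  have Mmeas[measurable]: "M \<in> borel_measurable borel"
    unfolding M_def
    by (intro borel_measurable_Min finite_cb borel_measurable_continuous_onI continuous_intros)
  have Mnn: "0 \<le> M x" for x
    unfolding M_def using finite_cb cb_ne by (subst Min_ge_iff) auto
  have Tmeas[measurable]: "triangle \<in> sets borel"
    using triangle_closed by (rule borel_closed)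
  have dmeas[measurable]: "(\<lambda>x. ennreal (4 / sqrt 3 * indicator triangle x)) \<in> borel_measurable lborel"
    by measurable
  have D: "distortion unif_triangle (cb m) = enn2real (\<integral>\<^sup>+x. ennreal (M x) \<partial>unif_triangle)"
    unfolding distortion_def M_def[symmetric]
    by (rule integral_eq_nn_integral) (auto simp: unif_triangle_def Mnn)
  have "(\<integral>\<^sup>+x. ennreal (M x) \<partial>unif_triangle) = (\<integral>\<^sup>+x. ennreal (4 / sqrt 3 * indicator triangle x) * ennreal (M x) \<partial>lborel)"
    unfolding unif_triangle_def by (rule nn_integral_density) auto
  also have "\<dots> \<le> (\<integral>\<^sup>+x. ennreal (4 / sqrt 3) * (ennreal (1 / (real m)^2) * Bh m (Sm (real m) x)) \<partial>lborel)"
  proof (rule nn_integral_mono)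
    fix x
    show "ennreal (4 / sqrt 3 * indicator triangle x) * ennreal (M x) \<le> ennreal (4 / sqrt 3) * (ennreal (1 / (real m)^2) * Bh m (Sm (real m) x))"
    proof (cases "x \<in> triangle")
      case True
      then show ?thesis using pointwise[OF m True] unfolding M_def by (simp add: mult_left_mono)
    qed simp
  qed
  also have "\<dots> = ennreal (4 / sqrt 3) * (ennreal (1 / (real m)^2) * (\<integral>\<^sup>+x. Bh m (Sm (real m) x) \<partial>lborel))"
  proof -
    have Sm_meas: "Sm (real m) \<in> borel_measurable borel"
      unfolding Sm_def by (intro borel_measurable_continuous_onI continuous_intros) auto
    have BS: "(\<lambda>x. Bh m (Sm (real m) x)) \<in> borel_measurable lborel"
      using measurable_compose[OF Sm_meas Bh_meas] by (simp add: o_def)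
    have BS2: "(\<lambda>x. ennreal (1 / (real m)^2) * Bh m (Sm (real m) x)) \<in> borel_measurable lborel"
      using BS by measurable
    show ?thesis
      by (simp only: nn_integral_cmult[OF BS2] nn_integral_cmult[OF BS])
  qed
  also have "(\<integral>\<^sup>+x. Bh m (Sm (real m) x) \<partial>lborel) = ennreal (sqrt 3 / (2 * (real m)^2)) * (of_nat (card (Cells m)) * ennreal (5/12))"
    by (simp add: change_vars[OF Bh_meas mpos] Bh_int)
  also have "ennreal (4 / sqrt 3) * (ennreal (1 / (real m)^2) * (ennreal (sqrt 3 / (2 * (real m)^2)) * (of_nat (card (Cells m)) * ennreal (5/12))))
     = ennreal (4 / sqrt 3 * (1 / (real m)^2 * (sqrt 3 / (2 * (real m)^2) * (real (card (Cells m)) * (5/12)))))"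
    by (simp add: ennreal_mult[symmetric] ennreal_of_nat_eq_real_of_nat)
  also have "4 / sqrt 3 * (1 / (real m)^2 * (sqrt 3 / (2 * (real m)^2) * (real (card (Cells m)) * (5/12)))) = 5 * real (card (Cells m)) / (6 * real m ^ 4)"
    using mpos by (simp add: field_simps power2_eq_square power4_eq_xxxx)
  finally have "(\<integral>\<^sup>+x. ennreal (M x) \<partial>unif_triangle) \<le> ennreal (5 * real (card (Cells m)) / (6 * real m ^ 4))" .
  then show ?thesis unfolding D
    by (intro enn2real_leI) auto
qed



lemma sum_lin: "2 * (\<Sum>a\<le>m. (m - a + 1)) = (m+1)*(m+2::nat)"
proof (induction m)
  case 0 then show ?case by simp
next
  case (Suc m)
  have e2: "(\<Sum>a\<le>m. (Suc m - a + 1)) = (\<Sum>a\<le>m. (m - a + 1) + 1)"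
    by (intro sum.cong) auto
  have e3: "(\<Sum>a\<le>m. (m - a + 1) + 1) = (\<Sum>a\<le>m. (m - a + 1)) + (m + 1)"
    by (simp only: sum.distrib) simp
  have e1: "(\<Sum>a\<le>Suc m. (Suc m - a + 1)) = (\<Sum>a\<le>m. (Suc m - a + 1)) + (Suc m - Suc m + 1)"
    by (rule sum.atMost_Suc)
  show ?case unfolding e1 e2 e3 using Suc.IH by (simp add: algebra_simps)
qed

lemma card_Cells: "2 * card (Cells m) = (m+1)*(m+2)"
proof -
  have "Cells m = Sigma {..m} (\<lambda>a. {..m-a})" by (auto simp: Cells_def)
  then have "card (Cells m) = (\<Sum>a\<le>m. (m - a + 1))" by (simp add: card_SigmaI)
  then show ?thesis using sum_lin by simp
qed

lemma sum_div3: "6 * (\<Sum>k\<le>M. (k div 3 + 1)) \<le> (M+1)*(M+6::nat)"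
proof (induction M)
  case 0 then show ?case by simp
next
  case (Suc M)
  have "6 * (Suc M div 3) \<le> 2 * Suc M" by presburger
  then show ?case using Suc.IH by (simp add: algebra_simps)
qed

lemma card_Ic: "6 * card (Ic M) \<le> (M+1)*(M+6)"
proof -
  have sub: "Ic M \<subseteq> (\<lambda>(k,t). (3*t + (M-k) mod 3, M-k)) ` Sigma {..M} (\<lambda>k. {..k div 3})"
  proof
    fix p assume p: "p \<in> Ic M"
    obtain i j where ij: "p = (i,j)" by (cases p)
    have h: "i + j \<le> M" "i mod 3 = j mod 3" using p ij by (auto simp: Ic_def)
    have "i div 3 \<le> (M - j) div 3" using h by (intro div_le_mono) linarith
    moreover have "(i, j) = (3 * (i div 3) + (M - (M - j)) mod 3, M - (M - j))"
      using h by auto presburger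
    ultimately show "p \<in> (\<lambda>(k,t). (3*t + (M-k) mod 3, M-k)) ` Sigma {..M} (\<lambda>k. {..k div 3})"
      unfolding ij by (intro image_eqI[of _ _ "(M - j, i div 3)"]) auto
  qed
  have "card (Ic M) \<le> card ((\<lambda>(k,t). (3*t + (M-k) mod 3, M-k)) ` Sigma {..M} (\<lambda>k. {..k div 3}))"
    by (rule card_mono[OF _ sub]) auto
  also have "\<dots> \<le> card (Sigma {..M} (\<lambda>k. {..k div 3}))" by (rule card_image_le) auto
  also have "\<dots> = (\<Sum>k\<le>M. (k div 3 + 1))" by (simp add: card_SigmaI)
  finally have "card (Ic M) \<le> (\<Sum>k\<le>M. (k div 3 + 1))" .
  then show ?thesis using sum_div3[of M] by linarith
qed

lemma card_cb: "6 * card (cb m) \<le> (m+3)*(m+8)"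
proof -
  have "card (cb m) \<le> card (Ic (m+2))" unfolding cb_def by (rule card_image_le[OF finite_Ic])
  then show ?thesis using card_Ic[of "m+2"] by (simp add: algebra_simps)
qed

lemma distortion_nonneg:
  assumes "finite \<alpha>" "\<alpha> \<noteq> {}"
  shows "0 \<le> distortion P \<alpha>"
  unfolding distortion_def using assms
  by (intro Bochner_Integration.integral_nonneg) (subst Min_ge_iff; auto)

lemma quant_bound:
  assumes m: "m \<ge> 1" and n: "(m+3)*(m+8) \<le> 6 * n"
  shows "quant_error unif_triangle n \<le> 5 * (real m + 1) * (real m + 2) / (12 * real m ^ 4)"
proof -
  have "card (cb m) \<le> n" using card_cb[of m] n by linarith
  then have mem: "distortion unif_triangle (cb m) \<in> {distortion unif_triangle \<alpha> | \<alpha>. finite \<alpha> \<and> \<alpha> \<noteq> {} \<and> card \<alpha> \<le> n}"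
    using finite_cb cb_ne by blast
  have bdd: "bdd_below {distortion unif_triangle \<alpha> | \<alpha>. finite \<alpha> \<and> \<alpha> \<noteq> {} \<and> card \<alpha> \<le> n}"
    by (rule bdd_belowI[of _ 0]) (auto intro: distortion_nonneg)
  have "quant_error unif_triangle n \<le> distortion unif_triangle (cb m)"
    unfolding quant_error_def by (rule cInf_lower[OF mem bdd])
  also have "\<dots> \<le> 5 * real (card (Cells m)) / (6 * real m ^ 4)" by (rule distortion_bound[OF m])
  also have "real (card (Cells m)) = (real m + 1) * (real m + 2) / 2"
  proof -
    have "real (2 * card (Cells m)) = real ((m+1)*(m+2))" using card_Cells[of m] by (rule arg_cong)
    then have "2 * real (card (Cells m)) = (real m + 1) * (real m + 2)" by (simp add: algebra_simps)
    then show ?thesis by simp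
  qed
  finally show ?thesis by (simp add: field_simps)
qed



lemma final_arith:
  fixes x s t :: real
  assumes s: "s = sqrt (6*x)" and s30: "s \<ge> 30" and ts: "t \<ge> s - 9" and t22: "t \<ge> 22" and x: "x > 0"
  shows "5*(t+1)*(t+2)/(12*t^4) \<le> 5/(72*x) + 4 * x powr (-3/2)"
proof -
  have tpos: "t > 0" using t22 by simp
  have A0: "(t+1)*(t+2)*(t-2)^2 \<le> t^4"
  proof -
    have e: "t^4 - (t+1)*(t+2)*(t-2)^2 = t^3 + 6*t^2 - 4*t - 8"
      by (simp add: power2_eq_square power3_eq_cube power4_eq_xxxx algebra_simps)
    have "2*2 \<le> t*t" using t22 by (intro mult_mono) auto
    then have "t^2 \<ge> 4" by (simp add: power2_eq_square)
    then have "t^3 \<ge> 4*t" using tpos by (simp add: power2_eq_square power3_eq_cube)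
    moreover have "6*t^2 \<ge> 8" using \<open>t^2 \<ge> 4\<close> by linarith
    ultimately show ?thesis using e by linarith
  qed
  have A: "5*(t+1)*(t+2)/(12*t^4) \<le> 5/(12*(t-2)^2)"
  proof -
    have p: "(t-2)^2 > 0" using t22 by simp
    have "5*(t+1)*(t+2)*(12*(t-2)^2) \<le> 5 * (12*t^4)" using A0 by (simp add: algebra_simps)
    then show ?thesis using p tpos by (simp add: divide_simps algebra_simps)
  qed
  define dd where "dd = s - 11"
  have dd: "dd > 0" "dd \<ge> s/2" "dd \<le> t - 2" using s30 ts by (auto simp: dd_def)
  have spos: "s > 0" using s30 by simp
  have B: "5/(12*(t-2)^2) \<le> 5/(12*dd^2)"
    using dd by (intro divide_left_mono mult_left_mono power_mono mult_pos_pos) auto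
  have C: "1/dd^2 \<le> 1/s^2 + 88/s^3"
  proof -
    have sd: "s = dd + 11" by (simp add: dd_def)
    have e1: "1/dd^2 - 1/s^2 = (s^2 - dd^2)/(dd^2* s^2)"
      using dd(1) spos by (simp add: field_simps)
    have e2: "s^2 - dd^2 = 11*(s+dd)" unfolding sd by (simp add: power2_eq_square algebra_simps)
    have "1/dd^2 - 1/s^2 = 11*(s+dd)/(dd^2* s^2)" using e1 e2 by simp
    also have "\<dots> \<le> 11*(2* s)/(dd^2* s^2)"
      using dd spos sd by (intro divide_right_mono) auto
    also have "\<dots> = 22/(dd^2* s)" using spos by (simp add: power2_eq_square field_simps)
    also have "\<dots> \<le> 22/((s/2)^2* s)"
      using dd spos by (intro divide_left_mono mult_right_mono power_mono mult_pos_pos) auto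
    also have "\<dots> = 88/s^3" using spos by (simp add: power2_eq_square power3_eq_cube field_simps)
    finally show ?thesis by simp
  qed
  have s2: "s^2 = 6*x" using s x by simp
  have sx: "s \<ge> 2 * sqrt x"
  proof -
    have "s = sqrt 6 * sqrt x" using s by (simp add: real_sqrt_mult)
    moreover have "sqrt 6 \<ge> 2" by (rule real_le_rsqrt) simp
    ultimately show ?thesis using mult_right_mono[of 2 "sqrt 6" "sqrt x"] x by simp
  qed
  have sqx: "sqrt x > 0" using x by simp
  have D1: "5/(12* s^2) = 5/(72*x)" using s2 by simp
  have D2: "5/12 * (88/s^3) \<le> 4 / (x * sqrt x)"
  proof -
    have "s^3 = 6*x* s" using s2 by (simp add: power2_eq_square power3_eq_cube)
    then have "5/12 * (88/s^3) = 110/(18*x* s)" using spos x by (simp add: field_simps)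
    also have "\<dots> \<le> 110/(18*x*(2* sqrt x))"
      using sx sqx x spos by (intro divide_left_mono mult_left_mono mult_pos_pos) auto
    also have "\<dots> \<le> 4 / (x * sqrt x)" using sqx x by (simp add: field_simps)
    finally show ?thesis .
  qed
  have P: "x powr (-3/2) = 1 / (x * sqrt x)"
  proof -
    have "x powr (3/2) = x powr (1 + 1/2)" by simp
    also have "\<dots> = x * sqrt x" using x by (simp only: powr_add) (simp add: powr_half_sqrt)
    finally have h: "x powr (3/2) = x * sqrt x" .
    have "x powr (-3/2) = x powr (- (3/2))" by simp
    also have "\<dots> = inverse (x powr (3/2))" by (rule powr_minus)
    finally show ?thesis unfolding h by (simp add: inverse_eq_divide)
  qed
  have "5*(t+1)*(t+2)/(12*t^4) \<le> 5/(12*dd^2)" using A B by linarith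
  also have "\<dots> = 5/12 * (1/dd^2)" by simp
  also have "\<dots> \<le> 5/12 * (1/s^2 + 88/s^3)" using C by (rule mult_left_mono) simp
  also have "\<dots> = 5/(12* s^2) + 5/12 * (88/s^3)" by (simp add: algebra_simps)
  also have "\<dots> \<le> 5/(72*x) + 4 / (x * sqrt x)" using D1 D2 by linarith
  finally show ?thesis unfolding P by simp
qed



theorem corollary6p4:
  shows "\<exists>C::real. \<exists>N::nat. \<forall>n\<ge>N.
           quant_error unif_triangle n \<le> 5 / (72 * real n) + C * real n powr (-3/2)"
proof (intro exI[where x="4::real"] exI[where x="150::nat"] allI impI)
  fix n :: nat assume n: "150 \<le> n"
  define s where "s = sqrt (6 * real n)"
  have "30^2 \<le> 6 * real n" using n by simp
  then have s30: "s \<ge> 30" unfolding s_def by (rule real_le_rsqrt)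
  define k where "k = nat \<lfloor>s\<rfloor>"
  have k: "real k \<le> s" "s < real k + 1" using s30 unfolding k_def by linarith+
  have "real k > 29" using k s30 by linarith
  then have k30: "k \<ge> 30" by simp
  define m where "m = k - 8"
  have mk: "real m = real k - 8" using k30 by (simp add: m_def)
  have m1: "m \<ge> 1" using k30 by (simp add: m_def)
  have "real k * real k \<le> s * s" using k by (intro mult_mono) auto
  also have "s * s = 6 * real n" unfolding s_def by simp
  finally have "real (k * k) \<le> real (6 * n)" by simp
  then have kk: "k * k \<le> 6 * n" by (simp only: of_nat_le_iff)
  have mk8: "m + 8 = k" using k30 by (simp add: m_def)
  have "(m+3)*(m+8) \<le> (m+8)*(m+8)" by simp
  then have mn: "(m+3)*(m+8) \<le> 6*n" using kk unfolding mk8 by linarith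
  have "quant_error unif_triangle n \<le> 5 * (real m + 1) * (real m + 2) / (12 * real m ^ 4)"
    by (rule quant_bound[OF m1 mn])
  also have "\<dots> \<le> 5 / (72 * real n) + 4 * real n powr (-3/2)"
    by (rule final_arith[OF s_def s30]) (use mk k k30 n in auto)
  finally show "quant_error unif_triangle n \<le> 5 / (72 * real n) + 4 * real n powr (-3/2)" .
qed

end
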